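(* Every bipartite circle graph has odd chromatic number at most $98$.
   Context: A graph is a circle graph if there is a collection of chords of a circle in bijection with its vertices such that two vertices are adjacent if and only if their chords intersect. The odd chromatic number of a graph $G$ is the minimum number of colors in a proper vertex coloring of $G$ such that for every non-isolated vertex $v$ some color appears on an odd number of vertices of the open neighborhood $N(v)$. *)

theory Defs
  imports "HOL-Analysis.Analysis"
begin

definition simple_graph :: "'a set \<Rightarrow> ('a \<Rightarrow> 'a \<Rightarrow> bool) \<Rightarrow> bool" where
  "simple_graph V E \<longleftrightarrow> finite V \<and>
     (\<forall>u v. E u v \<longrightarrow> u \<in> V \<and> v \<in> V) \<and>
     (\<forall>u v. E u v \<longrightarrow> E v u) \<and> (\<forall>v. \<not> E v v)"

definition bipartite :: "'a set \<Rightarrow> ('a \<Rightarrow> 'a \<Rightarrow> bool) \<Rightarrow> bool" where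
  "bipartite V E \<longleftrightarrow> (\<exists>side :: 'a \<Rightarrow> bool. \<forall>u\<in>V. \<forall>v\<in>V. E u v \<longrightarrow> side u \<noteq> side v)"

definition circle_graph :: "'a set \<Rightarrow> ('a \<Rightarrow> 'a \<Rightarrow> bool) \<Rightarrow> bool" where
  "circle_graph V E \<longleftrightarrow> (\<exists>p q :: 'a \<Rightarrow> complex.
     (\<forall>v\<in>V. cmod (p v) = 1 \<and> cmod (q v) = 1 \<and> p v \<noteq> q v) \<and>
     inj_on (\<lambda>v. closed_segment (p v) (q v)) V \<and>
     (\<forall>u\<in>V. \<forall>v\<in>V. u \<noteq> v \<longrightarrow>
        (E u v \<longleftrightarrow> closed_segment (p u) (q u) \<inter> closed_segment (p v) (q v) \<noteq> {})))"

definition odd_coloring :: "'a set \<Rightarrow> ('a \<Rightarrow> 'a \<Rightarrow> bool) \<Rightarrow> nat \<Rightarrow> ('a \<Rightarrow> nat) \<Rightarrow> bool" where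
  "odd_coloring V E k col \<longleftrightarrow>
     (\<forall>v\<in>V. col v < k) \<and>
     (\<forall>u\<in>V. \<forall>v\<in>V. E u v \<longrightarrow> col u \<noteq> col v) \<and>
     (\<forall>v\<in>V. (\<exists>u. E v u) \<longrightarrow> (\<exists>c. odd (card {u\<in>V. E v u \<and> col u = c})))"

definition odd_chromatic_number :: "'a set \<Rightarrow> ('a \<Rightarrow> 'a \<Rightarrow> bool) \<Rightarrow> nat" where
  "odd_chromatic_number V E = (LEAST k. \<exists>col. odd_coloring V E k col)"

end

theory Submission
  imports Defs
begin


datatype pos = Pos real int

instantiation pos :: linorder
begin
fun less_eq_pos :: "pos \<Rightarrow> pos \<Rightarrow> bool" where
  "less_eq_pos (Pos x d) (Pos y e) \<longleftrightarrow> x < y \<or> (x = y \<and> d \<le> e)"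
fun less_pos :: "pos \<Rightarrow> pos \<Rightarrow> bool" where
  "less_pos (Pos x d) (Pos y e) \<longleftrightarrow> x < y \<or> (x = y \<and> d < e)"
instance
proof
  fix a b c :: pos
  show "(a < b) = (a \<le> b \<and> \<not> b \<le> a)" by (cases a; cases b) auto
  show "a \<le> a" by (cases a) auto
  show "a \<le> b \<Longrightarrow> b \<le> c \<Longrightarrow> a \<le> c" by (cases a; cases b; cases c) auto
  show "a \<le> b \<Longrightarrow> b \<le> a \<Longrightarrow> a = b" by (cases a; cases b) auto
  show "a \<le> b \<or> b \<le> a" by (cases a; cases b) auto
qed
end

lemma pos_less_iff: "Pos x d < Pos y e \<longleftrightarrow> x < y \<or> (x = y \<and> d < e)" by simp





lemma outerplanar_aux:
  fixes E :: "(nat \<times> nat) set"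
  assumes "\<forall>(i,j)\<in>E. l \<le> i \<and> i < j \<and> j \<le> r"
    and "\<forall>(i,j)\<in>E. \<forall>(i',j')\<in>E. \<not> (i < i' \<and> i' < j \<and> j < j')"
    and "l < r"
  shows "card E + 1 \<le> 2*(r-l)"
  using assms
proof (induction "r - l" arbitrary: l r E rule: less_induct)
  case less
  have finE: "finite E"
    by (rule finite_subset[of _ "{l..r} \<times> {l..r}"]) (use less.prems(1) in auto)
  show ?case
  proof (cases "r = Suc l")
    case True
    have "E \<subseteq> {(l, r)}" using less.prems(1) True by fastforce
    then have "card E \<le> card {(l, r)}" by (intro card_mono) auto
    then have "card E \<le> 1" by simp
    then show ?thesis using True by simp
  next
    case False
    with less.prems have lr2: "l + 2 \<le> r" by simp
    define E0 where "E0 = E - {(l, r)}"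
    define J where "J = {j. (l, j) \<in> E0}"
    have finJ: "finite J" unfolding J_def
      by (rule finite_subset[of _ "{..r}"]) (use less.prems(1) in \<open>auto simp: E0_def\<close>)
    define m where "m = (if J = {} then Suc l else Max J)"
    have m: "l < m" "m < r"
    proof -
      show "l < m"
      proof (cases "J = {}")
        case True then show ?thesis by (simp add: m_def)
      next
        case False
        then obtain j where "j \<in> J" by blast
        then have "j \<le> Max J" using finJ by simp
        moreover have "l < j" using \<open>j \<in> J\<close> less.prems(1) unfolding J_def E0_def by auto
        ultimately show ?thesis using False by (simp add: m_def)
      qed
      show "m < r"
      proof (cases "J = {}")
        case True then show ?thesis using lr2 by (simp add: m_def)
      next
        case False
        then have "Max J \<in> J" using finJ by simp
        then have "(l, Max J) \<in> E" "Max J \<noteq> r" unfolding J_def E0_def by auto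
        then have "Max J < r" using less.prems(1) by fastforce
        then show ?thesis using False by (simp add: m_def)
      qed
    qed
    have uncov: "\<not> (i < m \<and> m < j)" if "(i, j) \<in> E0" for i j
    proof
      assume im: "i < m \<and> m < j"
      have ij: "l \<le> i" "j \<le> r" using that less.prems(1) unfolding E0_def by auto
      show False
      proof (cases "i = l")
        case True
        then have "j \<in> J" using that by (simp add: J_def)
        then have "J \<noteq> {}" by blast
        then have "j \<le> m" using finJ \<open>j \<in> J\<close> by (simp add: m_def)
        then show False using im by simp
      next
        case False
        then have "l < i" using ij by simp
        then have "m \<noteq> Suc l \<or> J \<noteq> {}" using im by auto
        show False
        proof (cases "J = {}")
          case True then show False using im \<open>l < i\<close> by (simp add: m_def)
        next
          case Jne: False
          then have "Max J \<in> J" using finJ by simp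
          then have "(l, m) \<in> E" using Jne unfolding J_def E0_def m_def by auto
          moreover have "(i, j) \<in> E" using that unfolding E0_def by auto
          ultimately show False using less.prems(2) \<open>l < i\<close> im by fastforce
        qed
      qed
    qed
    define EL where "EL = {(i, j) \<in> E0. j \<le> m}"
    define ER where "ER = {(i, j) \<in> E0. m \<le> i}"
    have E0split: "E0 \<subseteq> EL \<union> ER"
    proof
      fix x assume "x \<in> E0"
      obtain i j where x: "x = (i, j)" by fastforce
      have "i < j" using \<open>x \<in> E0\<close> less.prems(1) x unfolding E0_def by auto
      then have "j \<le> m \<or> m \<le> i" using uncov \<open>x \<in> E0\<close> x by fastforce
      then show "x \<in> EL \<union> ER" using \<open>x \<in> E0\<close> x unfolding EL_def ER_def by auto
    qed
    have cL: "card EL + 1 \<le> 2*(m - l)"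
      apply (rule less.hyps[of m l])
      using m less.prems unfolding EL_def E0_def by auto
    have cR: "card ER + 1 \<le> 2*(r - m)"
      apply (rule less.hyps[of r m])
      using m less.prems unfolding ER_def E0_def by auto
    have finE0: "finite E0" using finE by (simp add: E0_def)
    have fEL: "finite EL" by (rule finite_subset[OF _ finE0]) (auto simp: EL_def)
    have fER: "finite ER" by (rule finite_subset[OF _ finE0]) (auto simp: ER_def)
    have "card E0 \<le> card (EL \<union> ER)"
      by (rule card_mono) (use E0split fEL fER in auto)
    also have "\<dots> \<le> card EL + card ER" by (rule card_Un_le)
    finally have "card E0 \<le> card EL + card ER" .
    moreover have "card E \<le> card E0 + 1"
    proof -
      have "E \<subseteq> insert (l, r) E0" by (auto simp: E0_def)
      then have "card E \<le> card (insert (l, r) E0)" using finE0 by (intro card_mono) auto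
      also have "\<dots> \<le> card E0 + 1" using finE0 by (simp add: card_insert_if)
      finally show ?thesis .
    qed
    ultimately show ?thesis using cL cR m by linarith
  qed
qed

lemma outerplanar:
  fixes E :: "(nat \<times> nat) set"
  assumes "\<forall>(i,j)\<in>E. i < j \<and> j \<le> N"
    and "\<forall>(i,j)\<in>E. \<forall>(i',j')\<in>E. \<not> (i < i' \<and> i' < j \<and> j < j')"
  shows "card E \<le> 2*N"
proof (cases "N = 0")
  case True
  then have "E = {}" using assms(1) by auto
  then show ?thesis by simp
next
  case False
  have "card E + 1 \<le> 2*(N-0)"
    by (rule outerplanar_aux) (use assms False in auto)
  then show ?thesis by simp
qed




definition ilv :: "('v \<Rightarrow> 'p::linorder) \<Rightarrow> ('v \<Rightarrow> 'p) \<Rightarrow> 'v \<Rightarrow> 'v \<Rightarrow> bool" where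
  "ilv L R u v \<longleftrightarrow> (L u < L v \<and> L v < R u \<and> R u < R v) \<or> (L v < L u \<and> L u < R v \<and> R v < R u)"

lemma ilv_helper:
  fixes la ra lb rb :: "'p::linorder"
  assumes "la < ra" "lb < rb" "la \<noteq> lb" "la \<noteq> rb" "ra \<noteq> rb" "ra \<noteq> lb"
   and "(lb < la \<and> la < rb) \<noteq> (lb < ra \<and> ra < rb)"
  shows "(la < lb \<and> lb < ra \<and> ra < rb) \<or> (lb < la \<and> la < rb \<and> rb < ra)"
  using assms by (metis linorder_neqE order.strict_trans)

lemma ilv_sym: "ilv L R u v = ilv L R v u"
  unfolding ilv_def by auto

locale lam =
  fixes A B :: "'v set" and L R :: "'v \<Rightarrow> 'p::linorder"
  assumes finA: "finite A" and finB: "finite B" and disj: "A \<inter> B = {}"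
    and LR: "\<And>v. v \<in> A \<union> B \<Longrightarrow> L v < R v"
    and dist: "\<And>u v. u \<in> A \<union> B \<Longrightarrow> v \<in> A \<union> B \<Longrightarrow> u \<noteq> v \<Longrightarrow>
        L u \<noteq> L v \<and> L u \<noteq> R v \<and> R u \<noteq> R v"
    and lamA: "\<And>u v. u \<in> A \<Longrightarrow> v \<in> A \<Longrightarrow> \<not> ilv L R u v"
    and lamB: "\<And>u v. u \<in> B \<Longrightarrow> v \<in> B \<Longrightarrow> \<not> ilv L R u v"
begin

definition C :: "'p \<Rightarrow> 'v set" where
  "C p = {b\<in>B. L b < p \<and> p < R b}"

definition inn :: "'p \<Rightarrow> 'v option" where
  "inn p = (if C p = {} then None else Some (THE b. b \<in> C p \<and> (\<forall>b'\<in>C p. L b' \<le> L b)))"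

lemma finC: "finite (C p)"
  unfolding C_def using finB by simp

lemma dist': "u \<in> A \<union> B \<Longrightarrow> v \<in> A \<union> B \<Longrightarrow> u \<noteq> v \<Longrightarrow> R u \<noteq> L v"
  using dist[of v u] by auto

lemma N_eq:
  assumes a: "a \<in> A"
  shows "{b\<in>B. ilv L R a b} = (C (L a) - C (R a)) \<union> (C (R a) - C (L a))"
proof (intro set_eqI iffI)
  fix b assume "b \<in> {b\<in>B. ilv L R a b}"
  then have b: "b \<in> B" "ilv L R a b" by auto
  from b(2) consider (c1) "L a < L b" "L b < R a" "R a < R b" | (c2) "L b < L a" "L a < R b" "R b < R a"
    unfolding ilv_def by blast
  then show "b \<in> (C (L a) - C (R a)) \<union> (C (R a) - C (L a))"
  proof cases
    case c1
    then have "b \<notin> C (L a)" "b \<in> C (R a)" unfolding C_def using b(1) by (auto dest: less_not_sym)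
    then show ?thesis by blast
  next
    case c2
    then have "b \<in> C (L a)" "b \<notin> C (R a)" unfolding C_def using b(1) by (auto dest: less_not_sym)
    then show ?thesis by blast
  qed
next
  fix b assume bC: "b \<in> (C (L a) - C (R a)) \<union> (C (R a) - C (L a))"
  then have b: "b \<in> B" unfolding C_def by auto
  have ab: "a \<noteq> b \<Longrightarrow> L a \<noteq> L b \<and> L a \<noteq> R b \<and> R a \<noteq> R b \<and> R a \<noteq> L b"
    using dist[of a b] dist'[of a b] a b by auto
  have "a \<noteq> b" using bC unfolding C_def by auto
  then have d: "L a \<noteq> L b" "L a \<noteq> R b" "R a \<noteq> R b" "R a \<noteq> L b" using ab by auto
  have x: "(L b < L a \<and> L a < R b) \<noteq> (L b < R a \<and> R a < R b)"
    using bC b unfolding C_def by auto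
  have "L a < R a" "L b < R b" using LR[of a] LR[of b] a b by auto
  then have "ilv L R a b" unfolding ilv_def
    using ilv_helper d x by blast
  then show "b \<in> {b\<in>B. ilv L R a b}" using b by auto
qed

lemma inn_Some:
  assumes "inn p = Some b"
  shows "b \<in> C p" "\<forall>b'\<in>C p. L b' \<le> L b"
proof -
  have ne: "C p \<noteq> {}"
  proof
    assume "C p = {}"
    then have "inn p = None" unfolding inn_def by simp
    with assms show False by simp
  qed
  have fin: "finite (L ` C p)" using finC by (rule finite_imageI)
  have "Max (L ` C p) \<in> L ` C p" using ne fin by (intro Max_in) auto
  then obtain m where m: "m \<in> C p" "L m = Max (L ` C p)" by (metis imageE)
  have mmax: "\<forall>b'\<in>C p. L b' \<le> L m"
  proof
    fix b' assume "b' \<in> C p"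
    then have "L b' \<in> L ` C p" by (rule imageI)
    then have "L b' \<le> Max (L ` C p)" using fin by (rule Max_ge[rotated])
    then show "L b' \<le> L m" using m(2) by simp
  qed
  have uniq: "x = m" if "x \<in> C p \<and> (\<forall>b'\<in>C p. L b' \<le> L x)" for x
  proof (rule ccontr)
    assume xm: "x \<noteq> m"
    have xB: "x \<in> B" "m \<in> B" using that m(1) unfolding C_def by auto
    have "L x \<noteq> L m" using dist[of x m] xm xB by auto
    moreover have "L x \<le> L m" using mmax that by blast
    moreover have "L m \<le> L x" using that m(1) by blast
    ultimately show False by simp
  qed
  have th: "(THE x. x \<in> C p \<and> (\<forall>b'\<in>C p. L b' \<le> L x)) = m"
    by (rule the_equality) (use m(1) mmax uniq in blast)+
  have "inn p = Some (THE x. x \<in> C p \<and> (\<forall>b'\<in>C p. L b' \<le> L x))"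
    using ne unfolding inn_def by simp
  then have "b = m" using assms th by simp
  then show "b \<in> C p" "\<forall>b'\<in>C p. L b' \<le> L b" using m mmax by auto
qed

lemma inn_None: "inn p = None \<longleftrightarrow> C p = {}"
  unfolding inn_def by auto

lemma inn_range: "inn p \<in> insert None (Some ` B)"
proof (cases "inn p")
  case (Some b)
  then show ?thesis using inn_Some(1)[OF Some] unfolding C_def by auto
qed auto

lemma C_Some:
  assumes "inn p = Some b"
  shows "C p = insert b (C (L b))" "b \<notin> C (L b)"
proof -
  have b: "b \<in> C p" and mx: "\<forall>b'\<in>C p. L b' \<le> L b" using inn_Some[OF assms] by auto
  have bB: "b \<in> B" using b unfolding C_def by auto
  show "b \<notin> C (L b)" unfolding C_def by auto
  show "C p = insert b (C (L b))"
  proof (intro set_eqI iffI)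
    fix x assume x: "x \<in> C p"
    show "x \<in> insert b (C (L b))"
    proof (cases "x = b")
      case False
      have xB: "x \<in> B" using x unfolding C_def by auto
      have "L x \<noteq> L b" using dist[of x b] False xB bB by auto
      then have "L x < L b" using mx x by force
      moreover have "L b < R x" using b x unfolding C_def by auto
      ultimately show ?thesis using xB unfolding C_def by auto
    qed simp
  next
    fix x assume x: "x \<in> insert b (C (L b))"
    show "x \<in> C p"
    proof (cases "x = b")
      case False
      then have x1: "x \<in> B" "L x < L b" "L b < R x" using x unfolding C_def by auto
      have "R b \<noteq> R x" using dist[of x b] False x1 bB by auto
      moreover have "\<not> ilv L R x b" using lamB x1 bB by auto
      ultimately have "R b < R x" using x1 unfolding ilv_def by auto
      then show ?thesis using b x1 unfolding C_def by auto
    qed (use b in simp)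
  qed
qed

lemma C_inn: "C p = (case inn p of None \<Rightarrow> {} | Some b \<Rightarrow> insert b (C (L b)))"
proof (cases "inn p")
  case None then show ?thesis using inn_None[of p] by simp
next
  case (Some b) then show ?thesis using C_Some[OF Some] by simp
qed

lemma C_eq_if_inn_eq:
  assumes "inn p = inn q" shows "C p = C q"
proof -
  have "C p = (case inn p of None \<Rightarrow> {} | Some b \<Rightarrow> insert b (C (L b)))" by (rule C_inn)
  also have "\<dots> = (case inn q of None \<Rightarrow> {} | Some b \<Rightarrow> insert b (C (L b)))" using assms by simp
  also have "\<dots> = C q" by (rule C_inn[symmetric])
  finally show ?thesis .
qed

end



lemma symdiff_parity:
  assumes "finite X" "finite Y"
  shows "odd (card {b \<in> (X - Y) \<union> (Y - X). P b}) \<longleftrightarrow> (odd (card {b\<in>X. P b}) \<noteq> odd (card {b\<in>Y. P b}))"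
proof -
  define X' where "X' = {b\<in>X. P b}"
  define Y' where "Y' = {b\<in>Y. P b}"
  have f: "finite X'" "finite Y'" using assms by (auto simp: X'_def Y'_def)
  have e: "{b \<in> (X - Y) \<union> (Y - X). P b} = (X' - Y') \<union> (Y' - X')" by (auto simp: X'_def Y'_def)
  have c1: "card ((X' - Y') \<union> (Y' - X')) = card (X' - Y') + card (Y' - X')"
    by (rule card_Un_disjoint) (use f in auto)
  have c2: "card X' = card (X' - Y') + card (X' \<inter> Y')"
  proof -
    have "X' = (X' - Y') \<union> (X' \<inter> Y')" by auto
    then have "card X' = card ((X' - Y') \<union> (X' \<inter> Y'))" by simp
    also have "\<dots> = card (X' - Y') + card (X' \<inter> Y')" by (rule card_Un_disjoint) (use f in auto)
    finally show ?thesis .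
  qed
  have c3: "card Y' = card (Y' - X') + card (X' \<inter> Y')"
  proof -
    have "Y' = (Y' - X') \<union> (X' \<inter> Y')" by auto
    then have "card Y' = card ((Y' - X') \<union> (X' \<inter> Y'))" by simp
    also have "\<dots> = card (Y' - X') + card (X' \<inter> Y')" by (rule card_Un_disjoint) (use f in auto)
    finally show ?thesis .
  qed
  show ?thesis unfolding e X'_def[symmetric] Y'_def[symmetric] c1 using c2 c3 by presburger
qed

lemma even_classes:
  assumes "finite N" "\<And>c. even (card {b\<in>N. f b = c})"
  shows "even (card {b\<in>N. P (f b)})"
proof -
  define I where "I = {c \<in> f ` N. P c}"
  have eq: "{b\<in>N. P (f b)} = (\<Union>c\<in>I. {b\<in>N. f b = c})" by (auto simp: I_def)
  have "card (\<Union>c\<in>I. {b\<in>N. f b = c}) = (\<Sum>c\<in>I. card {b\<in>N. f b = c})"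
    by (rule card_UN_disjoint) (use assms(1) in \<open>auto simp: I_def\<close>)
  moreover have "even (\<Sum>c\<in>I. card {b\<in>N. f b = c})"
    by (rule dvd_sum) (use assms(2) in auto)
  ultimately show ?thesis using eq by simp
qed

context lam
begin

definition VH :: "'v option set" where "VH = insert None (Some ` B)"

definition adjH :: "'v option \<Rightarrow> 'v option \<Rightarrow> bool" where
  "adjH x y \<longleftrightarrow> x \<noteq> y \<and> (\<exists>a\<in>A. (x = inn (L a) \<and> y = inn (R a)) \<or> (x = inn (R a) \<and> y = inn (L a)))"

definition colr :: "('v option \<Rightarrow> nat) \<Rightarrow> 'v \<Rightarrow> nat" where
  "colr \<tau> b = xor (\<tau> (Some b)) (\<tau> (inn (L b)))"

lemma parity:
  "odd (card {b \<in> C p. bit (colr \<tau> b) j}) \<longleftrightarrow> (bit (\<tau> (inn p)) j \<noteq> bit (\<tau> None) j)"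
proof (induction "card (C p)" arbitrary: p rule: less_induct)
  case less
  show ?case
  proof (cases "inn p")
    case None
    then have "C p = {}" using inn_None by simp
    then show ?thesis using None by simp
  next
    case (Some b)
    have Cp: "C p = insert b (C (L b))" and nb: "b \<notin> C (L b)" using C_Some[OF Some] by auto
    have lt: "card (C (L b)) < card (C p)" unfolding Cp using nb finC by simp
    note IH = less.hyps[OF lt]
    define Q where "Q = (\<lambda>b. bit (colr \<tau> b) j)"
    have Qb: "Q b \<longleftrightarrow> (bit (\<tau> (Some b)) j \<noteq> bit (\<tau> (inn (L b))) j)"
      unfolding Q_def colr_def by (simp add: bit_xor_iff)
    have fin: "finite {x \<in> C (L b). Q x}" using finC by simp
    have nb2: "b \<notin> {x \<in> C (L b). Q x}" using nb by simp
    have "card {x \<in> C p. Q x} = (if Q b then Suc (card {x \<in> C (L b). Q x}) else card {x \<in> C (L b). Q x})"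
    proof (cases "Q b")
      case True
      then have "{x \<in> C p. Q x} = insert b {x \<in> C (L b). Q x}" unfolding Cp by auto
      then show ?thesis using True fin nb2 by simp
    next
      case False
      then have "{x \<in> C p. Q x} = {x \<in> C (L b). Q x}" unfolding Cp by auto
      then show ?thesis using False by simp
    qed
    moreover have IH': "odd (card {x \<in> C (L b). Q x}) \<longleftrightarrow> (bit (\<tau> (inn (L b))) j \<noteq> bit (\<tau> None) j)"
      using IH unfolding Q_def .
    ultimately have "odd (card {x \<in> C p. Q x}) \<longleftrightarrow> (bit (\<tau> (inn p)) j \<noteq> bit (\<tau> None) j)"
      using Qb Some by auto
    then show ?thesis unfolding Q_def .
  qed
qed

lemma odd_from_tau:
  assumes prp: "\<forall>x\<in>VH. \<forall>y\<in>VH. adjH x y \<longrightarrow> \<tau> x \<noteq> \<tau> y"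
    and a: "a \<in> A" and ne: "\<exists>b\<in>B. ilv L R a b"
  shows "\<exists>c. odd (card {b\<in>B. ilv L R a b \<and> colr \<tau> b = c})"
proof (rule ccontr)
  assume "\<not> ?thesis"
  then have ev: "\<And>c. even (card {b\<in>{b\<in>B. ilv L R a b}. colr \<tau> b = c})" by auto
  have NE: "{b\<in>B. ilv L R a b} = (C (L a) - C (R a)) \<union> (C (R a) - C (L a))" by (rule N_eq[OF a])
  then have "C (L a) \<noteq> C (R a)" using ne by auto
  then have ii: "inn (L a) \<noteq> inn (R a)" using C_eq_if_inn_eq by blast
  then have "adjH (inn (L a)) (inn (R a))" unfolding adjH_def using a by blast
  then have "\<tau> (inn (L a)) \<noteq> \<tau> (inn (R a))" using prp inn_range unfolding VH_def by blast
  then obtain j where j: "bit (\<tau> (inn (L a))) j \<noteq> bit (\<tau> (inn (R a))) j" using bit_eq_iff by blast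
  have "odd (card {b \<in> (C (L a) - C (R a)) \<union> (C (R a) - C (L a)). bit (colr \<tau> b) j})"
    using symdiff_parity[OF finC[of "L a"] finC[of "R a"], where P="\<lambda>b. bit (colr \<tau> b) j"]
      parity[of "L a" \<tau> j] parity[of "R a" \<tau> j] j by auto
  moreover have "even (card {b\<in>{b\<in>B. ilv L R a b}. (\<lambda>c. bit c j) (colr \<tau> b)})"
    by (rule even_classes) (use finB ev in auto)
  ultimately show False using NE by simp
qed

end



lemma greedy:
  fixes adj :: "'a \<Rightarrow> 'a \<Rightarrow> bool"
  assumes "finite W" and irr: "\<And>x. \<not> adj x x" and sym: "\<And>x y. adj x y \<Longrightarrow> adj y x"
    and deg: "\<And>W'. W' \<subseteq> W \<Longrightarrow> W' \<noteq> {} \<Longrightarrow> \<exists>w\<in>W'. card {w'\<in>W'. adj w w'} \<le> d"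
  shows "\<exists>\<tau>. (\<forall>x\<in>W. \<tau> x \<le> d) \<and> (\<forall>x\<in>W. \<forall>y\<in>W. adj x y \<longrightarrow> \<tau> x \<noteq> \<tau> y)"
  using assms(1) deg
proof (induction "card W" arbitrary: W rule: less_induct)
  case less
  show ?case
  proof (cases "W = {}")
    case True
    then show ?thesis by (intro exI[of _ "\<lambda>_. 0"]) auto
  next
    case False
    then obtain w where w: "w \<in> W" "card {w'\<in>W. adj w w'} \<le> d" using less.prems(2)[of W] by blast
    define W0 where "W0 = W - {w}"
    have lt: "card W0 < card W" unfolding W0_def using w(1) less.prems(1) by (metis card_Diff1_less)
    have "\<exists>\<tau>. (\<forall>x\<in>W0. \<tau> x \<le> d) \<and> (\<forall>x\<in>W0. \<forall>y\<in>W0. adj x y \<longrightarrow> \<tau> x \<noteq> \<tau> y)"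
      by (rule less.hyps[OF lt]) (use less.prems in \<open>auto simp: W0_def\<close>)
    then obtain \<tau>0 where t0: "\<forall>x\<in>W0. \<tau>0 x \<le> d" "\<forall>x\<in>W0. \<forall>y\<in>W0. adj x y \<longrightarrow> \<tau>0 x \<noteq> \<tau>0 y" by blast
    define Nw where "Nw = {w'\<in>W. adj w w'}"
    have finN: "finite Nw" using less.prems(1) by (simp add: Nw_def)
    have "card (\<tau>0 ` Nw) \<le> d" using w(2) card_image_le[OF finN, of \<tau>0] unfolding Nw_def by simp
    then have lt2: "card (\<tau>0 ` Nw) < card {0..d}" by simp
    have "\<not> ({0..d} \<subseteq> \<tau>0 ` Nw)"
    proof
      assume "{0..d} \<subseteq> \<tau>0 ` Nw"
      then have "card {0..d} \<le> card (\<tau>0 ` Nw)" using finN by (intro card_mono) auto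
      with lt2 show False by simp
    qed
    then obtain c where c: "c \<in> {0..d}" "c \<notin> \<tau>0 ` Nw" by blast
    define \<tau> where "\<tau> = \<tau>0(w := c)"
    have "\<forall>x\<in>W. \<tau> x \<le> d" using t0(1) c(1) unfolding \<tau>_def W0_def by auto
    moreover have "\<forall>x\<in>W. \<forall>y\<in>W. adj x y \<longrightarrow> \<tau> x \<noteq> \<tau> y"
    proof (intro ballI impI)
      fix x y assume xy: "x \<in> W" "y \<in> W" "adj x y"
      show "\<tau> x \<noteq> \<tau> y"
      proof (cases "x = w")
        case True
        then have "y \<noteq> w" using irr xy(3) by auto
        moreover have "y \<in> Nw" using xy True unfolding Nw_def by auto
        ultimately show ?thesis using c(2) True unfolding \<tau>_def by auto
      next
        case False
        show ?thesis
        proof (cases "y = w")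
          case True
          then have "x \<in> Nw" using xy sym unfolding Nw_def by auto
          then show ?thesis using c(2) True False unfolding \<tau>_def by auto
        next
          case False
          then show ?thesis using \<open>x \<noteq> w\<close> t0(2) xy unfolding \<tau>_def W0_def by auto
        qed
      qed
    qed
    ultimately show ?thesis by blast
  qed
qed




context lam
begin

lemma adjH_sym: "adjH x y \<Longrightarrow> adjH y x"
  unfolding adjH_def by blast

lemma adjH_irr: "\<not> adjH x x"
  unfolding adjH_def by blast

lemma A_not_B_endpoint:
  assumes "a \<in> A" "b \<in> B"
  shows "L a \<noteq> L b" "L a \<noteq> R b" "R a \<noteq> L b" "R a \<noteq> R b"
proof -
  have "a \<noteq> b" using assms disj by auto
  then show "L a \<noteq> L b" "L a \<noteq> R b" "R a \<noteq> R b" using dist[of a b] assms by auto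
  show "R a \<noteq> L b" using dist'[of a b] assms \<open>a \<noteq> b\<close> by auto
qed

definition kap :: "'v set \<Rightarrow> 'p \<Rightarrow> nat" where
  "kap B' x = card {e \<in> L ` B' \<union> R ` B'. e < x}"

lemma kap_mono:
  assumes "B' \<subseteq> B" "x \<le> y" shows "kap B' x \<le> kap B' y"
proof -
  have "finite (L ` B' \<union> R ` B')" using finB assms(1) by (meson finite_Un finite_imageI finite_subset)
  then show ?thesis unfolding kap_def using assms(2)
    by (intro card_mono) auto
qed

lemma kap_strict:
  assumes "B' \<subseteq> B" "e \<in> L ` B' \<union> R ` B'" "x \<le> e" "e < y" shows "kap B' x < kap B' y"
proof -
  have fin: "finite (L ` B' \<union> R ` B')" using finB assms(1) by (meson finite_Un finite_imageI finite_subset)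
  have xy: "x < y" using assms(3,4) by (rule le_less_trans)
  have s1: "{e \<in> L ` B' \<union> R ` B'. e < x} \<subseteq> {e \<in> L ` B' \<union> R ` B'. e < y}"
    using xy by auto
  have s2: "e \<in> {e \<in> L ` B' \<union> R ` B'. e < y}" "e \<notin> {e \<in> L ` B' \<union> R ` B'. e < x}"
    using assms(2-4) by auto
  have "{e \<in> L ` B' \<union> R ` B'. e < x} \<subset> {e \<in> L ` B' \<union> R ` B'. e < y}"
    using s1 s2 by blast
  then show ?thesis unfolding kap_def using fin by (intro psubset_card_mono) auto
qed

lemma kap_le: assumes "B' \<subseteq> B" shows "kap B' x \<le> 2 * card B'"
proof -
  have fB': "finite B'" using finB assms finite_subset by blast
  have "kap B' x \<le> card (L ` B' \<union> R ` B')" unfolding kap_def using fB' by (intro card_mono) auto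
  also have "\<dots> \<le> card (L ` B') + card (R ` B')" by (rule card_Un_le)
  also have "\<dots> \<le> card B' + card B'" using card_image_le[OF fB'] by (meson add_le_mono)
  finally show ?thesis by simp
qed

lemma kap_C:
  assumes B': "B' \<subseteq> B" and pq: "p < q" and k: "kap B' p = kap B' q" and b: "b \<in> B'"
    and np: "L b \<noteq> p" "R b \<noteq> p" and nq: "L b \<noteq> q" "R b \<noteq> q"
  shows "b \<in> C p \<longleftrightarrow> b \<in> C q"
proof
  assume "b \<in> C p"
  then have h: "L b < p" "p < R b" unfolding C_def by auto
  have "\<not> R b < q"
  proof
    assume "R b < q"
    then have "kap B' p < kap B' q" using kap_strict[OF B', of "R b" p q] b h by auto
    then show False using k by simp
  qed
  then have "q < R b" using nq by auto
  then show "b \<in> C q" using h pq b B' unfolding C_def by auto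
next
  assume "b \<in> C q"
  then have h: "L b < q" "q < R b" unfolding C_def by auto
  have "\<not> p < L b"
  proof
    assume "p < L b"
    then have "kap B' p < kap B' q" using kap_strict[OF B', of "L b" p q] b h by auto
    then show False using k by simp
  qed
  then have "L b < p" using np by auto
  then show "b \<in> C p" using h pq b B' unfolding C_def by auto
qed

lemma inn_eq_from_C:
  assumes W: "W \<subseteq> VH" and ip: "inn p \<in> W" and iq: "inn q \<in> W"
    and agree: "\<And>b. b \<in> B \<Longrightarrow> Some b \<in> W \<Longrightarrow> (b \<in> C p \<longleftrightarrow> b \<in> C q)"
  shows "inn p = inn q"
proof (cases "inn p")
  case None
  then have Cp: "C p = {}" using inn_None by simp
  show ?thesis
  proof (cases "inn q")
    case (Some b1)
    have "b1 \<in> C q" using inn_Some(1)[OF Some] .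
    then have "b1 \<in> B" unfolding C_def by auto
    then have "b1 \<in> C p" using agree \<open>b1 \<in> C q\<close> iq Some by auto
    then show ?thesis using Cp by simp
  qed (use None in simp)
next
  case (Some b0)
  have b0: "b0 \<in> C p" "\<forall>b'\<in>C p. L b' \<le> L b0" using inn_Some[OF Some] by auto
  have b0B: "b0 \<in> B" using b0(1) unfolding C_def by auto
  have "b0 \<in> C q" using agree[OF b0B] ip Some b0(1) by auto
  then have "C q \<noteq> {}" by auto
  then obtain b1 where Sq: "inn q = Some b1" using inn_None by (cases "inn q") auto
  have b1: "b1 \<in> C q" "\<forall>b'\<in>C q. L b' \<le> L b1" using inn_Some[OF Sq] by auto
  have b1B: "b1 \<in> B" using b1(1) unfolding C_def by auto
  have "b1 \<in> C p" using agree[OF b1B] iq Sq b1(1) by auto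
  have "L b1 \<le> L b0" using b0(2) \<open>b1 \<in> C p\<close> by blast
  moreover have "L b0 \<le> L b1" using b1(2) \<open>b0 \<in> C q\<close> by blast
  ultimately have "L b0 = L b1" by simp
  then have "b0 = b1" using dist[of b0 b1] b0B b1B by auto
  then show ?thesis using Some Sq by simp
qed

end



context lam
begin

definition pr :: "'v \<Rightarrow> 'v option set" where
  "pr a = {inn (L a), inn (R a)}"

definition rep :: "'v option set \<Rightarrow> 'v" where
  "rep S = (SOME a. a \<in> A \<and> pr a = S)"

lemma rep_spec:
  assumes "adjH w w'"
  shows "rep {w, w'} \<in> A" "pr (rep {w, w'}) = {w, w'}"
proof -
  have "\<exists>a. a \<in> A \<and> pr a = {w, w'}" using assms unfolding adjH_def pr_def by blast
  then have "rep {w, w'} \<in> A \<and> pr (rep {w, w'}) = {w, w'}" unfolding rep_def by (rule someI_ex)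
  then show "rep {w, w'} \<in> A" "pr (rep {w, w'}) = {w, w'}" by auto
qed

lemma degen:
  assumes W: "W \<subseteq> VH" and Wne: "W \<noteq> {}"
  shows "\<exists>w\<in>W. card {w'\<in>W. adjH w w'} \<le> 8"
proof (rule ccontr)
  assume "\<not> ?thesis"
  then have big: "\<forall>w\<in>W. 9 \<le> card {w'\<in>W. adjH w w'}" by auto
  have finVH: "finite VH" unfolding VH_def using finB by simp
  have finW: "finite W" using W finVH finite_subset by blast
  define Rp where "Rp = Sigma W (\<lambda>w. {w'\<in>W. adjH w w'})"
  have finRp: "finite Rp" unfolding Rp_def using finW by simp
  have cRp: "card Rp = (\<Sum>w\<in>W. card {w'\<in>W. adjH w w'})"
    unfolding Rp_def by (rule card_SigmaI) (use finW in auto)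
  have "(\<Sum>w\<in>W. (9::nat)) \<le> (\<Sum>w\<in>W. card {w'\<in>W. adjH w w'})"
    by (rule sum_mono) (use big in auto)
  then have low: "9 * card W \<le> card Rp" using cRp by simp
  define B' where "B' = {b\<in>B. Some b \<in> W}"
  have B'B: "B' \<subseteq> B" unfolding B'_def by auto
  have cB': "card B' \<le> card W"
  proof -
    have "card B' = card (Some ` B')" by (simp add: card_image)
    also have "\<dots> \<le> card W" using finW by (intro card_mono) (auto simp: B'_def)
    finally show ?thesis .
  qed
  define A' where "A' = (\<lambda>(w, w'). rep {w, w'}) ` Rp"
  have A'prop: "a \<in> A \<and> inn (L a) \<in> W \<and> inn (R a) \<in> W \<and> inn (L a) \<noteq> inn (R a) \<and> rep (pr a) = a"
    if aA: "a \<in> A'" for a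
  proof -
    obtain x where x: "x \<in> Rp" "a = (\<lambda>(w, w'). rep {w, w'}) x" using aA unfolding A'_def by blast
    obtain w w' where xw: "x = (w, w')" by fastforce
    have ww: "(w, w') \<in> Rp" "a = rep {w, w'}" using x xw by auto
    have adj: "adjH w w'" "w \<in> W" "w' \<in> W" using ww(1) unfolding Rp_def by auto
    have r: "a \<in> A" "pr a = {w, w'}" using rep_spec[OF adj(1)] ww(2) by auto
    have "w \<noteq> w'" using adj(1) unfolding adjH_def by auto
    then have "inn (L a) \<noteq> inn (R a)" using r(2) unfolding pr_def by (metis doubleton_eq_iff)
    moreover have "inn (L a) \<in> W" "inn (R a) \<in> W" using r(2) adj unfolding pr_def by (metis insertCI empty_iff insertE)+
    ultimately show ?thesis using r ww(2) by simp
  qed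
  define phi where "phi = (\<lambda>(w, w'). (rep {w, w'}, w = inn (L (rep {w, w'}))))"
  have inj: "inj_on phi Rp"
  proof (rule inj_onI)
    fix x y assume x: "x \<in> Rp" and y: "y \<in> Rp" and e: "phi x = phi y"
    obtain w1 w1' where x': "x = (w1, w1')" by fastforce
    obtain w2 w2' where y': "y = (w2, w2')" by fastforce
    have a1: "adjH w1 w1'" and a2: "adjH w2 w2'" using x y x' y' unfolding Rp_def by auto
    define a where "a = rep {w1, w1'}"
    have px: "phi x = (a, w1 = inn (L a))" unfolding phi_def a_def x' by simp
    have e2: "phi y = (rep {w2, w2'}, w2 = inn (L (rep {w2, w2'})))" unfolding phi_def y' by simp
    have ea: "rep {w2, w2'} = a" using e px e2 by simp
    have fl: "(w1 = inn (L a)) = (w2 = inn (L a))" using e px e2 ea by simp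
    have p1: "pr a = {w1, w1'}" using rep_spec[OF a1] unfolding a_def by simp
    have p2: "pr a = {w2, w2'}" using rep_spec[OF a2] ea by simp
    have n1: "w1 \<noteq> w1'" using a1 unfolding adjH_def by auto
    have "{w1, w1'} = {w2, w2'}" using p1 p2 by simp
    then have "(w1 = w2 \<and> w1' = w2') \<or> (w1 = w2' \<and> w1' = w2)" by (metis doubleton_eq_iff)
    moreover have "\<not> (w1 = w2' \<and> w1' = w2)"
    proof
      assume sw: "w1 = w2' \<and> w1' = w2"
      have "inn (L a) = w1 \<or> inn (L a) = w1'" using p1 unfolding pr_def by (metis doubleton_eq_iff)
      then show False using fl sw n1 by auto
    qed
    ultimately show "x = y" using x' y' by auto
  qed
  have "card Rp = card (phi ` Rp)" using inj by (simp add: card_image)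
  also have "\<dots> \<le> card (A' \<times> (UNIV :: bool set))"
  proof (rule card_mono)
    show "finite (A' \<times> (UNIV :: bool set))" unfolding A'_def using finRp by simp
    show "phi ` Rp \<subseteq> A' \<times> UNIV" unfolding phi_def A'_def by auto
  qed
  also have "\<dots> = 2 * card A'" by (simp add: card_cartesian_product)
  finally have up1: "card Rp \<le> 2 * card A'" .
  \<comment> \<open>bound card A' by the outerplanar lemma\<close>
  define ek where "ek = (\<lambda>a. (kap B' (L a), kap B' (R a)))"
  have Aend: "L b \<noteq> L a \<and> R b \<noteq> L a \<and> L b \<noteq> R a \<and> R b \<noteq> R a" if "a \<in> A" "b \<in> B" for a b
    using A_not_B_endpoint[OF that] by auto
  have agree: "kap B' p = kap B' q \<Longrightarrow> p \<in> {L a1, R a1} \<Longrightarrow> q \<in> {L a2, R a2} \<Longrightarrow> a1 \<in> A \<Longrightarrow> a2 \<in> A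
      \<Longrightarrow> inn p \<in> W \<Longrightarrow> inn q \<in> W \<Longrightarrow> inn p = inn q" for p q a1 a2
  proof -
    assume k: "kap B' p = kap B' q" and pa: "p \<in> {L a1, R a1}" and qa: "q \<in> {L a2, R a2}"
      and a12: "a1 \<in> A" "a2 \<in> A" and ipq: "inn p \<in> W" "inn q \<in> W"
    have np: "L b \<noteq> p \<and> R b \<noteq> p" and nq: "L b \<noteq> q \<and> R b \<noteq> q" if "b \<in> B" for b
      using Aend[OF a12(1) that] Aend[OF a12(2) that] pa qa by auto
    have ag: "b \<in> C p \<longleftrightarrow> b \<in> C q" if "b \<in> B" "Some b \<in> W" for b
    proof -
      have bB': "b \<in> B'" using that unfolding B'_def by auto
      consider "p < q" | "p = q" | "q < p" by fastforce
      then show ?thesis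
      proof cases
        case 1 then show ?thesis using kap_C[OF B'B 1 k bB'] np[OF that(1)] nq[OF that(1)] by auto
      next
        case 3 then show ?thesis using kap_C[OF B'B 3 k[symmetric] bB'] np[OF that(1)] nq[OF that(1)] by auto
      qed simp
    qed
    show "inn p = inn q" by (rule inn_eq_from_C[OF W ipq ag]) auto
  qed
  have injE: "inj_on ek A'"
  proof (rule inj_onI)
    fix a1 a2 assume a1: "a1 \<in> A'" and a2: "a2 \<in> A'" and e: "ek a1 = ek a2"
    have P1: "a1 \<in> A" "inn (L a1) \<in> W" "inn (R a1) \<in> W" "rep (pr a1) = a1" using A'prop[OF a1] by auto
    have P2: "a2 \<in> A" "inn (L a2) \<in> W" "inn (R a2) \<in> W" "rep (pr a2) = a2" using A'prop[OF a2] by auto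
    have "inn (L a1) = inn (L a2)" using agree[of "L a1" "L a2" a1 a2] e P1 P2 unfolding ek_def by auto
    moreover have "inn (R a1) = inn (R a2)" using agree[of "R a1" "R a2" a1 a2] e P1 P2 unfolding ek_def by auto
    ultimately have "pr a1 = pr a2" unfolding pr_def by simp
    then show "a1 = a2" using P1(4) P2(4) by metis
  qed
  have edges0: "\<forall>a\<in>A'. kap B' (L a) < kap B' (R a) \<and> kap B' (R a) \<le> 2 * card B'"
  proof
    fix a assume a: "a \<in> A'"
    have P: "a \<in> A" "inn (L a) \<in> W" "inn (R a) \<in> W" "inn (L a) \<noteq> inn (R a)" using A'prop[OF a] by auto
    have "L a < R a" using LR P(1) by auto
    then have "kap B' (L a) \<le> kap B' (R a)" using kap_mono[OF B'B] by auto
    moreover have "kap B' (L a) \<noteq> kap B' (R a)" using agree[of "L a" "R a" a a] P by auto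
    ultimately show "kap B' (L a) < kap B' (R a) \<and> kap B' (R a) \<le> 2 * card B'"
      using kap_le[OF B'B] by auto
  qed
  have edges: "\<forall>(i,j)\<in>ek ` A'. i < j \<and> j \<le> 2 * card B'"
    using edges0 unfolding ek_def by auto
  have lt: "x < y" if "kap B' x < kap B' y" for x y
  proof (rule ccontr)
    assume "\<not> x < y" then have "y \<le> x" by simp
    then have "kap B' y \<le> kap B' x" using kap_mono[OF B'B] by auto
    then show False using that by simp
  qed
  have nocross0: "\<forall>a1\<in>A'. \<forall>a2\<in>A'. \<not> (kap B' (L a1) < kap B' (L a2) \<and> kap B' (L a2) < kap B' (R a1) \<and> kap B' (R a1) < kap B' (R a2))"
  proof (intro ballI notI)
    fix a1 a2 assume a1: "a1 \<in> A'" and a2: "a2 \<in> A'"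
      and c: "kap B' (L a1) < kap B' (L a2) \<and> kap B' (L a2) < kap B' (R a1) \<and> kap B' (R a1) < kap B' (R a2)"
    have A1: "a1 \<in> A" and A2: "a2 \<in> A" using A'prop a1 a2 by auto
    have "L a1 < L a2" "L a2 < R a1" "R a1 < R a2" using c lt by auto
    then have "ilv L R a1 a2" unfolding ilv_def by auto
    then show False using lamA[OF A1 A2] by simp
  qed
  have nocross: "\<forall>(i,j)\<in>ek ` A'. \<forall>(i',j')\<in>ek ` A'. \<not> (i < i' \<and> i' < j \<and> j < j')"
    using nocross0 unfolding ek_def by auto
  have "card A' = card (ek ` A')" using injE by (simp add: card_image)
  also have "\<dots> \<le> 2 * (2 * card B')" by (rule outerplanar[OF edges nocross])
  finally have "card A' \<le> 4 * card B'" by simp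
  then have "card Rp \<le> 8 * card W" using up1 cB' by linarith
  moreover have "card W > 0" using Wne finW by (simp add: card_gt_0_iff)
  ultimately show False using low by linarith
qed

end



lemma xor_lt16:
  fixes x y :: nat
  assumes "x < 16" "y < 16" shows "xor x y < 16"
proof -
  have tx: "take_bit 4 x = x" using assms(1) by (simp add: take_bit_nat_eq_self_iff)
  have ty: "take_bit 4 y = y" using assms(2) by (simp add: take_bit_nat_eq_self_iff)
  have "xor x y = take_bit 4 (xor x y)" using tx ty by (simp add: take_bit_xor)
  also have "\<dots> < 2 ^ 4" by (rule take_bit_nat_less_exp)
  finally show ?thesis by simp
qed

context lam
begin

theorem core:
  "\<exists>col. (\<forall>b\<in>B. col b < (16::nat)) \<and>
     (\<forall>a\<in>A. (\<exists>b\<in>B. ilv L R a b) \<longrightarrow> (\<exists>c. odd (card {b\<in>B. ilv L R a b \<and> col b = c})))"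
proof -
  have finVH: "finite VH" unfolding VH_def using finB by simp
  have "\<exists>\<tau>::_ \<Rightarrow> nat. (\<forall>x\<in>VH. \<tau> x \<le> 8) \<and> (\<forall>x\<in>VH. \<forall>y\<in>VH. adjH x y \<longrightarrow> \<tau> x \<noteq> \<tau> y)"
  proof (rule greedy[where W=VH and d=8])
    show "finite VH" by (rule finVH)
    show "\<And>x. \<not> adjH x x" by (rule adjH_irr)
    show "\<And>x y. adjH x y \<Longrightarrow> adjH y x" by (rule adjH_sym)
    show "\<And>W'. W' \<subseteq> VH \<Longrightarrow> W' \<noteq> {} \<Longrightarrow> \<exists>w\<in>W'. card {w'\<in>W'. adjH w w'} \<le> 8"
      by (rule degen)
  qed
  then obtain \<tau> :: "_ \<Rightarrow> nat" where t: "\<forall>x\<in>VH. \<tau> x \<le> 8" "\<forall>x\<in>VH. \<forall>y\<in>VH. adjH x y \<longrightarrow> \<tau> x \<noteq> \<tau> y" by blast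
  have "\<forall>b\<in>B. colr \<tau> b < 16"
  proof
    fix b assume b: "b \<in> B"
    have "Some b \<in> VH" using b unfolding VH_def by auto
    then have "\<tau> (Some b) < 16" using t(1) by fastforce
    moreover have "\<tau> (inn (L b)) < 16" using t(1) inn_range[of "L b"] unfolding VH_def by fastforce
    ultimately show "colr \<tau> b < 16" unfolding colr_def by (rule xor_lt16)
  qed
  moreover have "\<forall>a\<in>A. (\<exists>b\<in>B. ilv L R a b) \<longrightarrow> (\<exists>c. odd (card {b\<in>B. ilv L R a b \<and> colr \<tau> b = c}))"
    using odd_from_tau[OF t(2)] by blast
  ultimately show ?thesis by blast
qed

end




lemma sin_identity:
  fixes s t :: real
  shows "sin (2 * s) + sin (2 * t) - sin (2 * s + 2 * t) = 4 * sin s * sin t * sin (s + t)"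
proof -
  have 1: "sin s * sin t = (cos (s - t) - cos (s + t)) / 2" by (rule sin_times_sin)
  have 2: "sin (s + t) * cos (s - t) = (sin (2 * s) + sin (2 * t)) / 2"
  proof -
    have "sin (s + t) * cos (s - t) = (sin ((s + t) + (s - t)) + sin ((s + t) - (s - t))) / 2"
      by (rule sin_times_cos)
    moreover have "(s + t) + (s - t) = 2 * s" "(s + t) - (s - t) = 2 * t" by simp_all
    ultimately show ?thesis by simp
  qed
  have 3: "sin (s + t) * cos (s + t) = sin (2 * s + 2 * t) / 2"
  proof -
    have "sin (s + t) * cos (s + t) = (sin ((s + t) + (s + t)) + sin ((s + t) - (s + t))) / 2"
      by (rule sin_times_cos)
    moreover have "(s + t) + (s + t) = 2 * s + 2 * t" by simp
    ultimately show ?thesis by simp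
  qed
  have h1: "2 * (sin s * sin t) = cos (s - t) - cos (s + t)" using 1 by simp
  have "4 * sin s * sin t * sin (s + t) = 2 * (2 * (sin s * sin t)) * sin (s + t)" by simp
  also have "\<dots> = 2 * (cos (s - t) - cos (s + t)) * sin (s + t)" by (simp only: h1)
  also have "\<dots> = 2 * (sin (s + t) * cos (s - t)) - 2 * (sin (s + t) * cos (s + t))"
    by (simp add: algebra_simps)
  finally have "4 * sin s * sin t * sin (s + t) = 2 * (sin (s + t) * cos (s - t)) - 2 * (sin (s + t) * cos (s + t))" .
  then show ?thesis using 2 3 by simp
qed

lemma f_cis:
  fixes a b x :: real
  shows "Im (cnj (cis b - cis a) * (cis x - cis a)) = sin (x - b) - sin (a - b) - sin (x - a)"
proof -
  have "cnj (cis b - cis a) * (cis x - cis a) = cis (-b) * cis x - cis (-b) * cis a - cis (-a) * cis x + cis (-a) * cis a"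
    by (simp add: cis_cnj algebra_simps)
  also have "\<dots> = cis (x - b) - cis (a - b) - cis (x - a) + 1"
    by (simp add: cis_mult)
  finally show ?thesis by simp
qed




lemma par_exists:
  fixes d1 d2 y1 y2 :: real
  assumes "d1 \<noteq> 0 \<or> d2 \<noteq> 0" "d1 * y2 = d2 * y1"
  shows "\<exists>t. y1 = t * d1 \<and> y2 = t * d2"
proof -
  define n where "n = d1^2 + d2^2"
  have n: "n > 0" using assms(1) unfolding n_def by (auto simp: add_pos_nonneg add_nonneg_pos)
  define t where "t = (d1 * y1 + d2 * y2) / n"
  have "t * d1 = (d1 * d1 * y1 + d1 * d2 * y2) / n" unfolding t_def by (simp add: field_simps)
  also have "\<dots> = (d1 * d1 * y1 + d2 * d2 * y1) / n" using assms(2) by (simp add: algebra_simps)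
  also have "\<dots> = (y1 * n) / n" unfolding n_def by (simp add: power2_eq_square algebra_simps)
  also have "\<dots> = y1" using n by simp
  finally have 1: "y1 = t * d1" by simp
  have "t * d2 = (d1 * d2 * y1 + d2 * d2 * y2) / n" unfolding t_def by (simp add: field_simps)
  also have "\<dots> = (d1 * d1 * y2 + d2 * d2 * y2) / n" using assms(2) by (simp add: algebra_simps)
  also have "\<dots> = (y2 * n) / n" unfolding n_def by (simp add: power2_eq_square algebra_simps)
  also have "\<dots> = y2" using n by simp
  finally have 2: "y2 = t * d2" by simp
  show ?thesis using 1 2 by blast
qed

lemma t_bounds:
  fixes p1 p2 d1 d2 t :: real
  assumes "p1^2 + p2^2 = 1" "(p1 + d1)^2 + (p2 + d2)^2 = 1" "(p1 + t*d1)^2 + (p2 + t*d2)^2 \<le> 1"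
    "d1 \<noteq> 0 \<or> d2 \<noteq> 0"
  shows "0 \<le> t \<and> t \<le> 1"
proof -
  define n where "n = d1^2 + d2^2"
  have n: "n > 0" using assms(4) unfolding n_def by (auto simp: add_pos_nonneg add_nonneg_pos)
  have h: "2 * (p1*d1 + p2*d2) = - n" using assms(1,2) unfolding n_def by (simp add: power2_eq_square algebra_simps)
  have "(p1 + t*d1)^2 + (p2 + t*d2)^2 = (p1^2 + p2^2) + t * (2 * (p1*d1 + p2*d2)) + t^2 * n"
    unfolding n_def by (simp add: power2_eq_square algebra_simps)
  then have e2: "(p1 + t*d1)^2 + (p2 + t*d2)^2 = 1 + t * (- n) + t^2 * n" by (simp only: assms(1) h)
  have "t^2 * n - t * n \<le> 0" using e2 assms(3) by linarith
  then have "(t^2 - t) * n \<le> 0" by (simp add: algebra_simps)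
  then have "t^2 - t \<le> 0" using n by (simp add: mult_le_0_iff)
  then have "t * (t - 1) \<le> 0" by (simp add: power2_eq_square algebra_simps)
  then show ?thesis by (simp add: mult_le_0_iff) linarith
qed

lemma seg_inter:
  fixes P Q Z W :: complex
  assumes P: "cmod P = 1" and Q: "cmod Q = 1" and PQ: "P \<noteq> Q" and Z: "cmod Z \<le> 1" and W: "cmod W \<le> 1"
  shows "closed_segment P Q \<inter> closed_segment Z W \<noteq> {} \<longleftrightarrow>
     Im (cnj (Q - P) * (Z - P)) * Im (cnj (Q - P) * (W - P)) \<le> 0"
proof -
  define f where "f = (\<lambda>X. Im (cnj (Q - P) * (X - P)))"
  have f_aff: "f ((1 - u) *\<^sub>R Z + u *\<^sub>R W) = (1 - u) * f Z + u * f W" for u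
    unfolding f_def by (simp add: scaleR_conv_of_real algebra_simps)
  have f_PQ: "f ((1 - t) *\<^sub>R P + t *\<^sub>R Q) = 0" for t
  proof -
    have "(1 - t) *\<^sub>R P + t *\<^sub>R Q - P = of_real t * (Q - P)" by (simp add: scaleR_conv_of_real algebra_simps)
    then have "f ((1 - t) *\<^sub>R P + t *\<^sub>R Q) = Im (cnj (Q - P) * (of_real t * (Q - P)))" unfolding f_def by simp
    also have "\<dots> = t * Im (cnj (Q - P) * (Q - P))" by (simp add: algebra_simps)
    also have "\<dots> = 0" by (simp add: algebra_simps)
    finally show ?thesis .
  qed
  have "closed_segment P Q \<inter> closed_segment Z W \<noteq> {} \<longleftrightarrow> f Z * f W \<le> 0"
  proof
    assume "closed_segment P Q \<inter> closed_segment Z W \<noteq> {}"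
    then obtain X where X: "X \<in> closed_segment P Q" "X \<in> closed_segment Z W" by blast
    obtain t where t: "X = (1 - t) *\<^sub>R P + t *\<^sub>R Q" using X(1) unfolding closed_segment_def by auto
    obtain u where u: "X = (1 - u) *\<^sub>R Z + u *\<^sub>R W" "0 \<le> u" "u \<le> 1" using X(2) unfolding closed_segment_def by auto
    have e: "(1 - u) * f Z + u * f W = 0" using f_aff[of u] f_PQ[of t] t u(1) by simp
    show "f Z * f W \<le> 0"
    proof (cases "u = 0")
      case True then show ?thesis using e by simp
    next
      case False
      then have "u > 0" using u(2) by simp
      have "f Z * ((1 - u) * f Z + u * f W) = 0" using e by simp
      then have "u * (f Z * f W) = - ((1 - u) * (f Z)^2)" by (simp add: algebra_simps power2_eq_square)
      moreover have "(1 - u) * (f Z)^2 \<ge> 0" using u(3) by simp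
      ultimately have "u * (f Z * f W) \<le> 0" by simp
      then show ?thesis using \<open>u > 0\<close> by (simp add: mult_le_0_iff)
    qed
  next
    assume le: "f Z * f W \<le> 0"
    obtain u where u: "0 \<le> u" "u \<le> 1" "(1 - u) * f Z + u * f W = 0"
    proof (cases "f Z = f W")
      case True
      then have "f Z = 0" using le by (metis mult_le_0_iff not_le order_antisym_conv)
      then show ?thesis using that[of 0] True by simp
    next
      case False
      define u where "u = f Z / (f Z - f W)"
      have ne: "f Z - f W \<noteq> 0" using False by simp
      have e: "(1 - u) * f Z + u * f W = 0" unfolding u_def using ne by (simp add: field_simps)
      have b: "0 \<le> u \<and> u \<le> 1"
      proof (cases "f Z > f W")
        case True
        then have "f Z \<ge> 0" "f W \<le> 0" using le by (auto simp: mult_le_0_iff)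
        then show ?thesis unfolding u_def using True by (simp add: divide_le_eq_1)
      next
        case False
        then have lt: "f Z < f W" using ne by simp
        then have "f Z \<le> 0" "f W \<ge> 0" using le by (auto simp: mult_le_0_iff)
        then have "u = (- f Z) / (f W - f Z)" unfolding u_def by (metis minus_diff_eq minus_divide_divide)
        moreover have d: "f W - f Z > 0" using lt by simp
        moreover have "0 \<le> - f Z / (f W - f Z)" using d \<open>f Z \<le> 0\<close> by (intro divide_nonneg_pos) auto
        moreover have "- f Z / (f W - f Z) \<le> 1" using d \<open>f W \<ge> 0\<close> by (subst divide_le_eq_1_pos) auto
        ultimately show ?thesis by simp
      qed
      show ?thesis using that[of u] b e by simp
    qed
    define X where "X = (1 - u) *\<^sub>R Z + u *\<^sub>R W"
    have XZW: "X \<in> closed_segment Z W" unfolding X_def closed_segment_def using u by auto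
    have fX: "f X = 0" unfolding X_def using f_aff u(3) by simp
    have nX: "cmod X \<le> 1"
    proof -
      have "cmod X \<le> cmod ((1 - u) *\<^sub>R Z) + cmod (u *\<^sub>R W)" unfolding X_def by (rule norm_triangle_ineq)
      also have "\<dots> = (1 - u) * cmod Z + u * cmod W" using u by simp
      also have "\<dots> \<le> (1 - u) * 1 + u * 1" using u Z W by (intro add_mono mult_left_mono) auto
      finally show ?thesis by simp
    qed
    define D where "D = Q - P"
    have Dne: "Re D \<noteq> 0 \<or> Im D \<noteq> 0" using PQ unfolding D_def by (auto simp: complex_eq_iff)
    have "Re D * Im (X - P) = Im D * Re (X - P)" using fX unfolding f_def D_def by (simp add: algebra_simps)
    then obtain t where t: "Re (X - P) = t * Re D" "Im (X - P) = t * Im D"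
      using par_exists[OF Dne] by blast
    have XPt: "X = P + of_real t * D" using t by (simp add: complex_eq_iff)
    have c1: "Re P ^ 2 + Im P ^ 2 = 1" using P by (simp add: cmod_power2[symmetric])
    have c2: "(Re P + Re D) ^ 2 + (Im P + Im D) ^ 2 = 1" using Q unfolding D_def
      by (simp add: cmod_power2[symmetric])
    have c3: "(Re P + t * Re D) ^ 2 + (Im P + t * Im D) ^ 2 \<le> 1"
    proof -
      have "cmod X ^ 2 \<le> 1" using nX by (simp add: power_le_one)
      then show ?thesis unfolding XPt by (simp add: cmod_power2)
    qed
    have tb: "0 \<le> t \<and> t \<le> 1" by (rule t_bounds[OF c1 c2 c3 Dne])
    have "X = (1 - t) *\<^sub>R P + t *\<^sub>R Q" unfolding XPt D_def by (simp add: scaleR_conv_of_real algebra_simps)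
    then have "X \<in> closed_segment P Q" unfolding closed_segment_def using tb by auto
    then show "closed_segment P Q \<inter> closed_segment Z W \<noteq> {}" using XZW by blast
  qed
  then show ?thesis unfolding f_def .
qed




lemma sgn_sin_half:
  fixes y :: real
  assumes "-2*pi < y" "y < 2*pi"
  shows "sgn (sin (y/2)) = sgn y"
proof -
  consider "y > 0" | "y = 0" | "y < 0" by fastforce
  then show ?thesis
  proof cases
    case 1
    then have "sin (y/2) > 0" using assms by (intro sin_gt_zero) auto
    then show ?thesis using 1 by simp
  next
    case 3
    then have "sin (-y/2) > 0" using assms by (intro sin_gt_zero) auto
    then have "sin (y/2) < 0" by simp
    then show ?thesis using 3 by simp
  qed simp
qed

lemma unit_cis:
  assumes "cmod z = 1" shows "z = cis (Arg z)"
proof -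
  have "z \<noteq> 0" using assms by auto
  then show ?thesis using Arg_eq[of z] assms by (simp add: cis_conv_exp)
qed

lemma f_formula:
  fixes a b x :: real
  shows "Im (cnj (cis b - cis a) * (cis x - cis a)) = 4 * sin ((x - b)/2) * sin ((b - a)/2) * sin ((x - a)/2)"
proof -
  have "Im (cnj (cis b - cis a) * (cis x - cis a)) = sin (x - b) - sin (a - b) - sin (x - a)"
    by (rule f_cis)
  also have "\<dots> = sin (2 * ((x - b)/2)) + sin (2 * ((b - a)/2)) - sin (2 * ((x - b)/2) + 2 * ((b - a)/2))"
  proof -
    have sab: "sin (a - b) = - sin (b - a)" by (metis minus_diff_eq sin_minus)
    have e1: "2 * ((x - b)/2) = x - b" by simp
    have e2: "2 * ((b - a)/2) = b - a" by simp
    have e4: "x - b + (b - a) = x - a" by simp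
    show ?thesis by (simp only: e1 e2 e4 sab)
  qed
  also have "\<dots> = 4 * sin ((x - b)/2) * sin ((b - a)/2) * sin ((x - b)/2 + (b - a)/2)"
    by (rule sin_identity)
  also have "(x - b)/2 + (b - a)/2 = (x - a)/2" by (simp add: field_simps)
  finally show ?thesis .
qed

lemma chord_cross:
  assumes P: "cmod P = 1" and Q: "cmod Q = 1" and Z: "cmod Z = 1" and W: "cmod W = 1" and PQ: "P \<noteq> Q"
  shows "closed_segment P Q \<inter> closed_segment Z W \<noteq> {} \<longleftrightarrow>
    ((Arg Z - Arg P) * (Arg Z - Arg Q)) * ((Arg W - Arg P) * (Arg W - Arg Q)) \<le> 0"
proof -
  define a b c d where "a = Arg P" "b = Arg Q" "c = Arg Z" "d = Arg W"
  have cP: "P = cis a" and cQ: "Q = cis b" and cZ: "Z = cis c" and cW: "W = cis d"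
    using unit_cis P Q Z W unfolding a_b_c_d_def by auto
  have ab: "a \<noteq> b" using PQ cP cQ by auto
  have rng: "-pi < t \<and> t \<le> pi" if "t \<in> {a, b, c, d}" for t
    using that mpi_less_Arg Arg_le_pi unfolding a_b_c_d_def by auto
  have sg: "sgn (sin ((y - z)/2)) = sgn (y - z)" if "y \<in> {a, b, c, d}" "z \<in> {a, b, c, d}" for y z
    using rng[OF that(1)] rng[OF that(2)] by (intro sgn_sin_half) auto
  have s_ab: "sgn (sin ((b - a)/2)) * sgn (sin ((b - a)/2)) = 1"
  proof -
    have "sgn (sin ((b - a)/2)) = sgn (b - a)" using sg by simp
    then show ?thesis using ab by (cases "b > a") (auto simp: sgn_if)
  qed
  have "closed_segment P Q \<inter> closed_segment Z W \<noteq> {} \<longleftrightarrow>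
     Im (cnj (Q - P) * (Z - P)) * Im (cnj (Q - P) * (W - P)) \<le> 0"
    by (rule seg_inter) (use P Q Z W PQ in auto)
  also have "\<dots> \<longleftrightarrow> (4 * sin ((c - b)/2) * sin ((b - a)/2) * sin ((c - a)/2)) *
        (4 * sin ((d - b)/2) * sin ((b - a)/2) * sin ((d - a)/2)) \<le> 0"
    unfolding cP cQ cZ cW f_formula ..
  also have "\<dots> \<longleftrightarrow> sgn ((4 * sin ((c - b)/2) * sin ((b - a)/2) * sin ((c - a)/2)) *
        (4 * sin ((d - b)/2) * sin ((b - a)/2) * sin ((d - a)/2))) \<le> 0"
    by simp
  also have "sgn ((4 * sin ((c - b)/2) * sin ((b - a)/2) * sin ((c - a)/2)) *
        (4 * sin ((d - b)/2) * sin ((b - a)/2) * sin ((d - a)/2))) =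
      sgn (c - b) * sgn (c - a) * sgn (d - b) * sgn (d - a) * (sgn (sin ((b - a)/2)) * sgn (sin ((b - a)/2)))"
    using sg by (simp add: sgn_mult)
  also have "\<dots> = sgn (((c - a) * (c - b)) * ((d - a) * (d - b)))"
    using s_ab by (simp add: sgn_mult)
  finally show ?thesis unfolding a_b_c_d_def by simp
qed




lemma gf_neg: "(l::real) < h \<Longrightarrow> (x - l) * (x - h) < 0 \<longleftrightarrow> l < x \<and> x < h"
  by (auto simp: mult_less_0_iff)

lemma gf_zero: "(x - l) * (x - h) = (0::real) \<longleftrightarrow> x = l \<or> x = h"
  by auto

lemma gf_pos: "(l::real) < h \<Longrightarrow> (x - l) * (x - h) > 0 \<longleftrightarrow> x < l \<or> h < x"
  by (auto simp: zero_less_mult_iff)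

lemma prod_le0_iff:
  fixes g1 g2 :: real
  shows "g1 * g2 \<le> 0 \<longleftrightarrow> g1 = 0 \<or> g2 = 0 \<or> (g1 < 0) \<noteq> (g2 < 0)"
  by (auto simp: mult_le_0_iff)

locale cg_setup =
  fixes V :: "'a set" and E :: "'a \<Rightarrow> 'a \<Rightarrow> bool" and p q :: "'a \<Rightarrow> complex" and side :: "'a \<Rightarrow> bool"
  assumes finV: "finite V"
   and Edom: "\<And>u v. E u v \<Longrightarrow> u \<in> V \<and> v \<in> V"
   and Esym: "\<And>u v. E u v \<Longrightarrow> E v u"
   and unit: "\<And>v. v \<in> V \<Longrightarrow> cmod (p v) = 1 \<and> cmod (q v) = 1 \<and> p v \<noteq> q v"
   and Eseg: "\<And>u v. u \<in> V \<Longrightarrow> v \<in> V \<Longrightarrow> u \<noteq> v \<Longrightarrow>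
      (E u v \<longleftrightarrow> closed_segment (p u) (q u) \<inter> closed_segment (p v) (q v) \<noteq> {})"
   and bip: "\<And>u v. u \<in> V \<Longrightarrow> v \<in> V \<Longrightarrow> E u v \<Longrightarrow> side u \<noteq> side v"
begin

definition lo :: "'a \<Rightarrow> real" where "lo v = min (Arg (p v)) (Arg (q v))"
definition hi :: "'a \<Rightarrow> real" where "hi v = max (Arg (p v)) (Arg (q v))"
definition gf :: "'a \<Rightarrow> real \<Rightarrow> real" where "gf u x = (x - lo u) * (x - hi u)"

lemma lohi: "v \<in> V \<Longrightarrow> lo v < hi v"
proof -
  assume v: "v \<in> V"
  have "Arg (p v) \<noteq> Arg (q v)"
  proof
    assume "Arg (p v) = Arg (q v)"
    then have "p v = q v" using unit_cis[of "p v"] unit_cis[of "q v"] unit[OF v] by metis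
    then show False using unit[OF v] by simp
  qed
  then show "lo v < hi v" unfolding lo_def hi_def by auto
qed

lemma E_iff_gf:
  assumes u: "u \<in> V" and v: "v \<in> V" and uv: "u \<noteq> v"
  shows "E u v \<longleftrightarrow> gf u (lo v) * gf u (hi v) \<le> 0"
proof -
  have "E u v \<longleftrightarrow> ((Arg (p v) - Arg (p u)) * (Arg (p v) - Arg (q u))) * ((Arg (q v) - Arg (p u)) * (Arg (q v) - Arg (q u))) \<le> 0"
    using Eseg[OF u v uv] chord_cross[of "p u" "q u" "p v" "q v"] unit[OF u] unit[OF v] by simp
  moreover have "(x - Arg (p u)) * (x - Arg (q u)) = gf u x" for x
    unfolding gf_def lo_def hi_def by (cases "Arg (p u) \<le> Arg (q u)") (auto simp: min_def max_def algebra_simps)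
  moreover have "gf u (lo v) * gf u (hi v) = gf u (Arg (p v)) * gf u (Arg (q v))"
    unfolding lo_def hi_def by (cases "Arg (p v) \<le> Arg (q v)") (auto simp: min_def max_def)
  ultimately show ?thesis by simp
qed

lemma same_side:
  assumes u: "u \<in> V" and v: "v \<in> V" and uv: "u \<noteq> v" and s: "side u = side v"
  shows "lo v \<noteq> lo u" "lo v \<noteq> hi u" "hi v \<noteq> lo u" "hi v \<noteq> hi u"
    "(lo u < lo v \<and> lo v < hi u) = (lo u < hi v \<and> hi v < hi u)"
proof -
  have "\<not> E u v" using bip[OF u v] s by auto
  then have g: "\<not> gf u (lo v) * gf u (hi v) \<le> 0" using E_iff_gf[OF u v uv] by simp
  then have nz: "gf u (lo v) \<noteq> 0" "gf u (hi v) \<noteq> 0" and sg: "(gf u (lo v) < 0) = (gf u (hi v) < 0)"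
    using prod_le0_iff by blast+
  show "lo v \<noteq> lo u" "lo v \<noteq> hi u" "hi v \<noteq> lo u" "hi v \<noteq> hi u" using nz unfolding gf_def by auto
  show "(lo u < lo v \<and> lo v < hi u) = (lo u < hi v \<and> hi v < hi u)"
    using sg gf_neg[OF lohi[OF u]] unfolding gf_def by simp
qed

definition A :: "'a set" where "A = {v\<in>V. side v}"
definition B :: "'a set" where "B = {v\<in>V. \<not> side v}"

definition shA :: "real \<Rightarrow> 'a" where "shA x = (SOME a. a \<in> A \<and> (x = lo a \<or> x = hi a))"

definition dl :: "real \<Rightarrow> real \<Rightarrow> int" where
  "dl x y = (if \<exists>a\<in>A. x = lo a \<or> x = hi a then
     (if y = lo (shA x) \<or> y = hi (shA x) then 1
      else if (lo (shA x) < y \<and> y < hi (shA x)) = (x = lo (shA x)) then -1 else 1) else 0)"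

definition Lp :: "'a \<Rightarrow> pos" where
  "Lp v = (if side v then Pos (lo v) 0 else Pos (lo v) (dl (lo v) (hi v)))"
definition Rp :: "'a \<Rightarrow> pos" where
  "Rp v = (if side v then Pos (hi v) 0 else Pos (hi v) (dl (hi v) (lo v)))"

lemma A_endpoint_unique:
  assumes a: "a \<in> A" and a': "a' \<in> A" and x: "x = lo a \<or> x = hi a" and x': "x = lo a' \<or> x = hi a'"
  shows "a = a'"
proof (rule ccontr)
  assume "a \<noteq> a'"
  moreover have "a \<in> V" "a' \<in> V" "side a" "side a'" using a a' unfolding A_def by auto
  ultimately show False using same_side[of a a'] x x' by auto
qed

lemma shA_eq: "a \<in> A \<Longrightarrow> x = lo a \<or> x = hi a \<Longrightarrow> shA x = a"
  unfolding shA_def by (rule some_equality) (auto intro: A_endpoint_unique)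

lemma dl_nz: "a \<in> A \<Longrightarrow> x = lo a \<or> x = hi a \<Longrightarrow> dl x y \<noteq> 0"
  unfolding dl_def by auto

end



lemma pos_lt_neq: "x \<noteq> y \<Longrightarrow> Pos x d < Pos y e \<longleftrightarrow> x < y"
  by auto

lemma ilv_iff_in:
  fixes la ra lb rb :: "'p::linorder"
  assumes "la < ra" "lb < rb" "la \<noteq> lb" "la \<noteq> rb" "ra \<noteq> lb" "ra \<noteq> rb"
  shows "((la < lb \<and> lb < ra \<and> ra < rb) \<or> (lb < la \<and> la < rb \<and> rb < ra)) \<longleftrightarrow>
    ((la < lb \<and> lb < ra) \<noteq> (la < rb \<and> rb < ra))"
proof -
  have t: "\<And>x y z. (x::'p) < y \<Longrightarrow> y < z \<Longrightarrow> x < z" by (rule less_trans)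
  have n: "\<And>x y. (x::'p) \<noteq> y \<Longrightarrow> x < y \<or> y < x" by (rule linorder_neqE) auto
  show ?thesis using assms n[OF assms(3)] n[OF assms(4)] n[OF assms(5)] n[OF assms(6)]
    by (auto dest: t)
qed

context cg_setup
begin

lemma AV: "a \<in> A \<Longrightarrow> a \<in> V \<and> side a" unfolding A_def by auto
lemma BV: "b \<in> B \<Longrightarrow> b \<in> V \<and> \<not> side b" unfolding B_def by auto

lemma in_Bpt:
  assumes a: "a \<in> A" and zw: "z \<noteq> w"
  shows "(Pos (lo a) 0 < Pos z (dl z w) \<and> Pos z (dl z w) < Pos (hi a) 0) \<longleftrightarrow>
    (if z = lo a \<or> z = hi a then (if w = lo a \<or> w = hi a then z = lo a else \<not> (lo a < w \<and> w < hi a))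
     else (lo a < z \<and> z < hi a))"
proof -
  have la: "lo a < hi a" using lohi AV[OF a] by auto
  show ?thesis
  proof (cases "z = lo a \<or> z = hi a")
    case False
    then have n1: "lo a \<noteq> z" "z \<noteq> hi a" by auto
    have "Pos (lo a) 0 < Pos z (dl z w) \<longleftrightarrow> lo a < z" by (rule pos_lt_neq[OF n1(1)])
    moreover have "Pos z (dl z w) < Pos (hi a) 0 \<longleftrightarrow> z < hi a" by (rule pos_lt_neq[OF n1(2)])
    ultimately show ?thesis using False by simp
  next
    case True
    have sh: "shA z = a" using shA_eq[OF a True] .
    have ex: "\<exists>a\<in>A. z = lo a \<or> z = hi a" using a True by blast
    define d where "d = (if w = lo a \<or> w = hi a then 1
      else if (lo a < w \<and> w < hi a) = (z = lo a) then -1 else (1::int))"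
    have d: "dl z w = d"
      unfolding dl_def d_def using ex sh by simp
    show ?thesis
    proof (cases "z = lo a")
      case True
      have "Pos (lo a) 0 < Pos z d \<longleftrightarrow> 0 < d" using True by simp
      moreover have "Pos z d < Pos (hi a) 0" using True la by simp
      moreover have "0 < d \<longleftrightarrow> (if w = lo a \<or> w = hi a then z = lo a else \<not> (lo a < w \<and> w < hi a))"
        unfolding d_def using True by auto
      ultimately show ?thesis using True d by simp
    next
      case False
      then have zh: "z = hi a" using \<open>z = lo a \<or> z = hi a\<close> by simp
      have "Pos (lo a) 0 < Pos z d" using zh la by simp
      moreover have "Pos z d < Pos (hi a) 0 \<longleftrightarrow> d < 0" using zh by simp
      moreover have "d < 0 \<longleftrightarrow> (if w = lo a \<or> w = hi a then z = lo a else \<not> (lo a < w \<and> w < hi a))"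
        unfolding d_def using False by auto
      ultimately show ?thesis using zh d by simp
    qed
  qed
qed

lemma Lp_A: "a \<in> A \<Longrightarrow> Lp a = Pos (lo a) 0" unfolding Lp_def using AV by auto
lemma Rp_A: "a \<in> A \<Longrightarrow> Rp a = Pos (hi a) 0" unfolding Rp_def using AV by auto
lemma Lp_B: "b \<in> B \<Longrightarrow> Lp b = Pos (lo b) (dl (lo b) (hi b))" unfolding Lp_def using BV by auto
lemma Rp_B: "b \<in> B \<Longrightarrow> Rp b = Pos (hi b) (dl (hi b) (lo b))" unfolding Rp_def using BV by auto

lemma Lp_real: "\<exists>d. Lp v = Pos (lo v) d" unfolding Lp_def by auto
lemma Rp_real: "\<exists>d. Rp v = Pos (hi v) d" unfolding Rp_def by auto

lemma AB_V: "v \<in> A \<union> B \<Longrightarrow> v \<in> V" unfolding A_def B_def by auto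

lemma LR_pos: "v \<in> A \<union> B \<Longrightarrow> Lp v < Rp v"
proof -
  assume v: "v \<in> A \<union> B"
  obtain d e where "Lp v = Pos (lo v) d" "Rp v = Pos (hi v) e" using Lp_real Rp_real by blast
  then show ?thesis using lohi[OF AB_V[OF v]] by simp
qed

lemma same_side_pos:
  assumes u: "u \<in> V" and v: "v \<in> V" and uv: "u \<noteq> v" and s: "side u = side v"
  shows "Lp u \<noteq> Lp v \<and> Lp u \<noteq> Rp v \<and> Rp u \<noteq> Rp v \<and> Rp u \<noteq> Lp v"
proof -
  have ne: "lo v \<noteq> lo u" "lo v \<noteq> hi u" "hi v \<noteq> lo u" "hi v \<noteq> hi u" using same_side[OF u v uv s] by auto
  obtain d1 e1 d2 e2 where "Lp u = Pos (lo u) d1" "Rp u = Pos (hi u) e1" "Lp v = Pos (lo v) d2" "Rp v = Pos (hi v) e2"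
    using Lp_real Rp_real by blast
  then show ?thesis using ne by auto
qed

lemma dist_pos:
  assumes u: "u \<in> A \<union> B" and v: "v \<in> A \<union> B" and uv: "u \<noteq> v"
  shows "Lp u \<noteq> Lp v \<and> Lp u \<noteq> Rp v \<and> Rp u \<noteq> Rp v"
proof (cases "side u = side v")
  case True
  then show ?thesis using same_side_pos[OF AB_V[OF u] AB_V[OF v] uv] by auto
next
  case False
  have gen: "Lp a \<noteq> Lp b \<and> Lp a \<noteq> Rp b \<and> Rp a \<noteq> Rp b \<and> Rp a \<noteq> Lp b" if a: "a \<in> A" and b: "b \<in> B" for a b
  proof -
    have n1: "dl (lo b) (hi b) \<noteq> 0" if "lo b = lo a \<or> lo b = hi a" using dl_nz[OF a] that by auto
    have n2: "dl (hi b) (lo b) \<noteq> 0" if "hi b = lo a \<or> hi b = hi a" using dl_nz[OF a] that by auto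
    show ?thesis unfolding Lp_A[OF a] Rp_A[OF a] Lp_B[OF b] Rp_B[OF b] using n1 n2 by auto
  qed
  have "(u \<in> A \<and> v \<in> B) \<or> (u \<in> B \<and> v \<in> A)" using u v False unfolding A_def B_def by auto
  then show ?thesis
  proof
    assume "u \<in> A \<and> v \<in> B" then show ?thesis using gen[of u v] by simp
  next
    assume "u \<in> B \<and> v \<in> A" then show ?thesis using gen[of v u] by (simp add: eq_commute)
  qed
qed

lemma real_ilv_same_side:
  assumes u: "u \<in> V" and v: "v \<in> V" and uv: "u \<noteq> v" and s: "side u = side v"
  shows "\<not> ilv Lp Rp u v"
proof -
  have ne: "lo v \<noteq> lo u" "lo v \<noteq> hi u" "hi v \<noteq> lo u" "hi v \<noteq> hi u" and
    io: "(lo u < lo v \<and> lo v < hi u) = (lo u < hi v \<and> hi v < hi u)" using same_side[OF u v uv s] by auto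
  obtain d1 e1 d2 e2 where P: "Lp u = Pos (lo u) d1" "Rp u = Pos (hi u) e1" "Lp v = Pos (lo v) d2" "Rp v = Pos (hi v) e2"
    using Lp_real Rp_real by blast
  have c1: "Lp u < Lp v \<longleftrightarrow> lo u < lo v" unfolding P using ne by (intro pos_lt_neq) auto
  have c2: "Lp v < Rp u \<longleftrightarrow> lo v < hi u" unfolding P using ne by (intro pos_lt_neq) auto
  have c3: "Rp u < Rp v \<longleftrightarrow> hi u < hi v" unfolding P using ne by (intro pos_lt_neq) auto
  have c4: "Lp v < Lp u \<longleftrightarrow> lo v < lo u" unfolding P using ne by (intro pos_lt_neq) auto
  have c5: "Lp u < Rp v \<longleftrightarrow> lo u < hi v" unfolding P using ne by (intro pos_lt_neq) auto
  have c6: "Rp v < Rp u \<longleftrightarrow> hi v < hi u" unfolding P using ne by (intro pos_lt_neq) auto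
  show ?thesis unfolding ilv_def c1 c2 c3 c4 c5 c6 using io lohi[OF u] lohi[OF v] by auto
qed

lemma E_iff_ilv:
  assumes a: "a \<in> A" and b: "b \<in> B"
  shows "E a b \<longleftrightarrow> ilv Lp Rp a b"
proof -
  have aV: "a \<in> V" and bV: "b \<in> V" using a b unfolding A_def B_def by auto
  have ab: "a \<noteq> b" using a b unfolding A_def B_def by auto
  have la: "lo a < hi a" and lb: "lo b < hi b" using lohi aV bV by auto
  have d: "Lp a \<noteq> Lp b" "Lp a \<noteq> Rp b" "Rp a \<noteq> Lp b" "Rp a \<noteq> Rp b"
    using dist_pos[of a b] dist_pos[of b a] a b ab by auto
  have "ilv Lp Rp a b \<longleftrightarrow> ((Lp a < Lp b \<and> Lp b < Rp a) \<noteq> (Lp a < Rp b \<and> Rp b < Rp a))"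
    unfolding ilv_def by (rule ilv_iff_in) (use LR_pos a b d in auto)
  also have "\<dots> \<longleftrightarrow> ((if lo b = lo a \<or> lo b = hi a then (if hi b = lo a \<or> hi b = hi a then lo b = lo a else \<not> (lo a < hi b \<and> hi b < hi a))
     else (lo a < lo b \<and> lo b < hi a)) \<noteq>
     (if hi b = lo a \<or> hi b = hi a then (if lo b = lo a \<or> lo b = hi a then hi b = lo a else \<not> (lo a < lo b \<and> lo b < hi a))
     else (lo a < hi b \<and> hi b < hi a)))"
    unfolding Lp_A[OF a] Rp_A[OF a] Lp_B[OF b] Rp_B[OF b]
    using in_Bpt[OF a, of "lo b" "hi b"] in_Bpt[OF a, of "hi b" "lo b"] lb by simp
  also have "\<dots> \<longleftrightarrow> gf a (lo b) * gf a (hi b) \<le> 0"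
    unfolding prod_le0_iff gf_def gf_zero gf_neg[OF la] using la lb by auto
  also have "\<dots> \<longleftrightarrow> E a b" using E_iff_gf[OF aV bV ab] by simp
  finally show ?thesis by simp
qed

lemma ilv_irr: "\<not> ilv L R u u"
  unfolding ilv_def by auto

lemma lam_AB: "lam A B Lp Rp"
proof
  show "finite A" using finV unfolding A_def by simp
  show "finite B" using finV unfolding B_def by simp
  show "A \<inter> B = {}" unfolding A_def B_def by auto
  show "\<And>v. v \<in> A \<union> B \<Longrightarrow> Lp v < Rp v" by (rule LR_pos)
  show "\<And>u v. u \<in> A \<union> B \<Longrightarrow> v \<in> A \<union> B \<Longrightarrow> u \<noteq> v \<Longrightarrow> Lp u \<noteq> Lp v \<and> Lp u \<noteq> Rp v \<and> Rp u \<noteq> Rp v"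
    by (rule dist_pos)
  show "\<And>u v. u \<in> A \<Longrightarrow> v \<in> A \<Longrightarrow> \<not> ilv Lp Rp u v"
  proof -
    fix u v assume "u \<in> A" "v \<in> A"
    then show "\<not> ilv Lp Rp u v" using real_ilv_same_side[of u v] ilv_irr[of Lp Rp u] unfolding A_def by (cases "u = v") auto
  qed
  show "\<And>u v. u \<in> B \<Longrightarrow> v \<in> B \<Longrightarrow> \<not> ilv Lp Rp u v"
  proof -
    fix u v assume "u \<in> B" "v \<in> B"
    then show "\<not> ilv Lp Rp u v" using real_ilv_same_side[of u v] ilv_irr[of Lp Rp u] unfolding B_def by (cases "u = v") auto
  qed
qed

lemma lam_BA: "lam B A Lp Rp"
proof -
  interpret l: lam A B Lp Rp by (rule lam_AB)
  show ?thesis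
  proof
    show "finite B" "finite A" by (rule l.finB, rule l.finA)
    show "B \<inter> A = {}" using l.disj by auto
    show "\<And>v. v \<in> B \<union> A \<Longrightarrow> Lp v < Rp v" using l.LR by auto
    show "\<And>u v. u \<in> B \<union> A \<Longrightarrow> v \<in> B \<union> A \<Longrightarrow> u \<noteq> v \<Longrightarrow> Lp u \<noteq> Lp v \<and> Lp u \<noteq> Rp v \<and> Rp u \<noteq> Rp v"
      using l.dist by (simp add: Un_commute)
    show "\<And>u v. u \<in> B \<Longrightarrow> v \<in> B \<Longrightarrow> \<not> ilv Lp Rp u v" by (rule l.lamB)
    show "\<And>u v. u \<in> A \<Longrightarrow> v \<in> A \<Longrightarrow> \<not> ilv Lp Rp u v" by (rule l.lamA)
  qed
qed

theorem exists_odd_coloring: "\<exists>col. odd_coloring V E 32 col"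
proof -
  obtain colB :: "'a \<Rightarrow> nat" where cB: "\<forall>b\<in>B. colB b < 16"
    "\<forall>a\<in>A. (\<exists>b\<in>B. ilv Lp Rp a b) \<longrightarrow> (\<exists>c. odd (card {b\<in>B. ilv Lp Rp a b \<and> colB b = c}))"
    using lam.core[OF lam_AB] by blast
  obtain colA :: "'a \<Rightarrow> nat" where cA: "\<forall>a\<in>A. colA a < 16"
    "\<forall>b\<in>B. (\<exists>a\<in>A. ilv Lp Rp b a) \<longrightarrow> (\<exists>c. odd (card {a\<in>A. ilv Lp Rp b a \<and> colA a = c}))"
    using lam.core[OF lam_BA] by blast
  define col where "col v = (if side v then colA v else 16 + colB v)" for v
  have inA: "v \<in> V \<Longrightarrow> side v \<Longrightarrow> v \<in> A" for v unfolding A_def by auto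
  have inB: "v \<in> V \<Longrightarrow> \<not> side v \<Longrightarrow> v \<in> B" for v unfolding B_def by auto
  have EBA: "E b a \<longleftrightarrow> ilv Lp Rp b a" if "a \<in> A" "b \<in> B" for a b
    using E_iff_ilv[OF that] Esym ilv_sym[of Lp Rp a b] by blast
  have "odd_coloring V E 32 col"
    unfolding odd_coloring_def
  proof (intro conjI ballI impI allI)
    fix v assume v: "v \<in> V"
    show "col v < 32"
    proof (cases "side v")
      case True
      then have "colA v < 16" using cA(1) inA[OF v] by blast
      then show ?thesis using True unfolding col_def by simp
    next
      case False
      then have "colB v < 16" using cB(1) inB[OF v] by blast
      then show ?thesis using False unfolding col_def by simp
    qed
  next
    fix u v assume u: "u \<in> V" and v: "v \<in> V" and e: "E u v"
    have "side u \<noteq> side v" using bip[OF u v e] .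
    then show "col u \<noteq> col v"
    proof (cases "side u")
      case True
      then have "\<not> side v" using \<open>side u \<noteq> side v\<close> by simp
      have "colA u < 16" using cA(1) inA[OF u True] by blast
      then show ?thesis using True \<open>\<not> side v\<close> unfolding col_def by simp
    next
      case False
      then have "side v" using \<open>side u \<noteq> side v\<close> by simp
      have "colA v < 16" using cA(1) inA[OF v \<open>side v\<close>] by blast
      then show ?thesis using False \<open>side v\<close> unfolding col_def by simp
    qed
  next
    fix v assume v: "v \<in> V" and ex: "\<exists>u. E v u"
    then obtain u where e: "E v u" by blast
    have u: "u \<in> V" using Edom[OF e] by simp
    have suv: "side v \<noteq> side u" using bip[OF v u e] .
    show "\<exists>c. odd (card {u\<in>V. E v u \<and> col u = c})"
    proof (cases "side v")
      case True
      have vA: "v \<in> A" using inA[OF v True] .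
      have uB: "u \<in> B" using inB[OF u] suv True by simp
      have "\<exists>b\<in>B. ilv Lp Rp v b" using uB E_iff_ilv[OF vA uB] e by blast
      then obtain c where c: "odd (card {b\<in>B. ilv Lp Rp v b \<and> colB b = c})" using cB(2) vA by blast
      have "{u\<in>V. E v u \<and> col u = 16 + c} = {b\<in>B. ilv Lp Rp v b \<and> colB b = c}"
      proof (intro set_eqI iffI)
        fix x assume x: "x \<in> {u\<in>V. E v u \<and> col u = 16 + c}"
        then have xV: "x \<in> V" and ex: "E v x" by auto
        have "\<not> side x" using bip[OF v xV ex] True by simp
        then have xB: "x \<in> B" using inB[OF xV] by simp
        show "x \<in> {b\<in>B. ilv Lp Rp v b \<and> colB b = c}"
          using x xB E_iff_ilv[OF vA xB] \<open>\<not> side x\<close> unfolding col_def by auto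
      next
        fix x assume x: "x \<in> {b\<in>B. ilv Lp Rp v b \<and> colB b = c}"
        then have xB: "x \<in> B" by simp
        show "x \<in> {u\<in>V. E v u \<and> col u = 16 + c}"
          using x BV[OF xB] E_iff_ilv[OF vA xB] unfolding col_def by auto
      qed
      then show ?thesis using c by (intro exI[of _ "16 + c"]) simp
    next
      case False
      have vB: "v \<in> B" using inB[OF v False] .
      have uA: "u \<in> A" using inA[OF u] suv False by simp
      have "\<exists>a\<in>A. ilv Lp Rp v a" using uA EBA[OF uA vB] e by blast
      then obtain c where c: "odd (card {a\<in>A. ilv Lp Rp v a \<and> colA a = c})" using cA(2) vB by blast
      have "{u\<in>V. E v u \<and> col u = c} = {a\<in>A. ilv Lp Rp v a \<and> colA a = c}"
      proof (intro set_eqI iffI)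
        fix x assume x: "x \<in> {u\<in>V. E v u \<and> col u = c}"
        then have xV: "x \<in> V" and ex: "E v x" by auto
        have "side x" using bip[OF v xV ex] False by simp
        then have xA: "x \<in> A" using inA[OF xV] by simp
        show "x \<in> {a\<in>A. ilv Lp Rp v a \<and> colA a = c}"
          using x xA EBA[OF xA vB] \<open>side x\<close> unfolding col_def by auto
      next
        fix x assume x: "x \<in> {a\<in>A. ilv Lp Rp v a \<and> colA a = c}"
        then have xA: "x \<in> A" by simp
        show "x \<in> {u\<in>V. E v u \<and> col u = c}"
          using x AV[OF xA] EBA[OF xA vB] unfolding col_def by auto
      qed
      then show ?thesis using c by (intro exI[of _ c]) simp
    qed
  qed
  then show ?thesis by blast
qed

end

theorem corollary1p6:
  fixes V :: "'a set" and E :: "'a \<Rightarrow> 'a \<Rightarrow> bool"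
  assumes "simple_graph V E" and "circle_graph V E" and "bipartite V E"
  shows "odd_chromatic_number V E \<le> 98"
proof -
  have sg: "finite V" "\<And>u v. E u v \<Longrightarrow> u \<in> V \<and> v \<in> V" "\<And>u v. E u v \<Longrightarrow> E v u"
    using assms(1) unfolding simple_graph_def by blast+
  obtain p q :: "'a \<Rightarrow> complex" where pq:
    "\<forall>v\<in>V. cmod (p v) = 1 \<and> cmod (q v) = 1 \<and> p v \<noteq> q v"
    "\<forall>u\<in>V. \<forall>v\<in>V. u \<noteq> v \<longrightarrow>
        (E u v \<longleftrightarrow> closed_segment (p u) (q u) \<inter> closed_segment (p v) (q v) \<noteq> {})"
    using assms(2) unfolding circle_graph_def by blast
  obtain side :: "'a \<Rightarrow> bool" where sd: "\<forall>u\<in>V. \<forall>v\<in>V. E u v \<longrightarrow> side u \<noteq> side v"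
    using assms(3) unfolding bipartite_def by blast
  interpret cg: cg_setup V E p q side
  proof
    show "finite V" by (rule sg(1))
    show "\<And>u v. E u v \<Longrightarrow> u \<in> V \<and> v \<in> V" by (rule sg(2))
    show "\<And>u v. E u v \<Longrightarrow> E v u" by (rule sg(3))
    show "\<And>v. v \<in> V \<Longrightarrow> cmod (p v) = 1 \<and> cmod (q v) = 1 \<and> p v \<noteq> q v" using pq(1) by blast
    show "\<And>u v. u \<in> V \<Longrightarrow> v \<in> V \<Longrightarrow> u \<noteq> v \<Longrightarrow>
      (E u v \<longleftrightarrow> closed_segment (p u) (q u) \<inter> closed_segment (p v) (q v) \<noteq> {})" using pq(2) by blast
    show "\<And>u v. u \<in> V \<Longrightarrow> v \<in> V \<Longrightarrow> E u v \<Longrightarrow> side u \<noteq> side v" using sd by blast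
  qed
  obtain col where "odd_coloring V E 32 col" using cg.exists_odd_coloring by blast
  then have "odd_chromatic_number V E \<le> 32"
    unfolding odd_chromatic_number_def by (intro Least_le) blast
  then show ?thesis by simp
qed

end
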